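(* Let $P(t)=\sum_{n\ge0}p_nt^n$, where $p_n$ is the number of permutations of length $n$ sortable by two stacks in parallel, and let $t_c$ be the radius of convergence of $P$. Then for every $t\in[0,t_c)$, \[\sqrt{2P(t)}\ \ge\ 1+\sqrt{2tP(t)},\] and the inequality also holds at $t=t_c$, where $P(t_c)=\lim_{t\to t_c^-}P(t)$.
   Context: A permutation $\sigma$ of $\{1,\dots,n\}$ is \emph{sortable by two stacks in parallel} if, starting with the sequence $\sigma(1)\sigma(2)\cdots\sigma(n)$ as input and two initially empty stacks, one can repeatedly either move the next input element onto the top of either stack, or move the top element of either stack to the output, so that at the end the output is $1,2,\dots,n$ in that order. A permutation is \emph{sortable by a deque} if the same holds with the two stacks replaced by a single double-ended queue (elements may be inserted and removed at either end). Let $D(t)=\sum_{n\ge0}d_nt^n$, $d_n$ the number of deque-sortable permutations of length $n$. It is known (and may be assumed) that, writing $P=P(t)$, \[2D(t)=2+t+2Pt-2Pt^2-t\sqrt{1-4P+4P^2-8P^2t+4P^2t^2-4Pt}\] as formal power series, and that $P$ and $D$ have the same radius of convergence $t_c$ (equal exponential growth rates of $p_n$ and $d_n$), with $t_c<1$. *)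

theory Defs
  imports "HOL-Analysis.Analysis" "HOL-Computational_Algebra.Formal_Power_Series"
begin

definition is_perm :: "nat \<Rightarrow> nat list \<Rightarrow> bool" where
  "is_perm n xs \<longleftrightarrow> distinct xs \<and> set xs = {1..n}"

inductive pstep :: "nat list \<times> nat list \<times> nat list \<times> nat list \<Rightarrow>
                    nat list \<times> nat list \<times> nat list \<times> nat list \<Rightarrow> bool" where
  push1: "pstep (x # inp, s1, s2, out) (inp, x # s1, s2, out)"
| push2: "pstep (x # inp, s1, s2, out) (inp, s1, x # s2, out)"
| pop1:  "pstep (inp, x # s1, s2, out) (inp, s1, s2, out @ [x])"
| pop2:  "pstep (inp, s1, x # s2, out) (inp, s1, s2, out @ [x])"

definition par_stack_sortable :: "nat list \<Rightarrow> bool" where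
  "par_stack_sortable \<sigma> \<longleftrightarrow>
     pstep\<^sup>*\<^sup>* (\<sigma>, [], [], []) ([], [], [], [1..<length \<sigma> + 1])"

inductive dstep :: "nat list \<times> nat list \<times> nat list \<Rightarrow>
                    nat list \<times> nat list \<times> nat list \<Rightarrow> bool" where
  push_front: "dstep (x # inp, q, out) (inp, x # q, out)"
| push_back:  "dstep (x # inp, q, out) (inp, q @ [x], out)"
| pop_front:  "dstep (inp, x # q, out) (inp, q, out @ [x])"
| pop_back:   "dstep (inp, q @ [x], out) (inp, q, out @ [x])"

definition deque_sortable :: "nat list \<Rightarrow> bool" where
  "deque_sortable \<sigma> \<longleftrightarrow>
     dstep\<^sup>*\<^sup>* (\<sigma>, [], []) ([], [], [1..<length \<sigma> + 1])"

definition p_count :: "nat \<Rightarrow> nat" where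
  "p_count n = card {\<sigma>. is_perm n \<sigma> \<and> par_stack_sortable \<sigma>}"

definition d_count :: "nat \<Rightarrow> nat" where
  "d_count n = card {\<sigma>. is_perm n \<sigma> \<and> deque_sortable \<sigma>}"

definition Pfps :: "real fps" where "Pfps = Abs_fps (\<lambda>n. real (p_count n))"
definition Dfps :: "real fps" where "Dfps = Abs_fps (\<lambda>n. real (d_count n))"

definition Pval :: "real \<Rightarrow> real" where
  "Pval t = (\<Sum>n. real (p_count n) * t ^ n)"

end

theory Submission
  imports Defs
begin


type_synonym cfg = "nat list \<times> nat list \<times> nat list \<times> nat list"

inductive lstep :: "nat \<Rightarrow> cfg \<Rightarrow> cfg \<Rightarrow> bool" where
  "lstep 0 (x # inp, s1, s2, out) (inp, x # s1, s2, out)"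
| "lstep 1 (x # inp, s1, s2, out) (inp, s1, x # s2, out)"
| "lstep 2 (inp, x # s1, s2, out) (inp, s1, s2, out @ [x])"
| "lstep 3 (inp, s1, x # s2, out) (inp, s1, s2, out @ [x])"

inductive lrun :: "nat list \<Rightarrow> cfg \<Rightarrow> cfg \<Rightarrow> bool" where
  "lrun [] c c"
| "lstep k c c' \<Longrightarrow> lrun ks c' c'' \<Longrightarrow> lrun (k # ks) c c''"

lemma pstep_lstep: "pstep c c' \<Longrightarrow> \<exists>k. lstep k c c'"
  by (induction rule: pstep.induct) (auto intro: lstep.intros)

lemma rtr_lrun: "pstep\<^sup>*\<^sup>* c c' \<Longrightarrow> \<exists>ks. lrun ks c c'"
proof (induction rule: converse_rtranclp_induct)
  case base then show ?case by (auto intro: lrun.intros)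
next
  case (step y z)
  then show ?case using pstep_lstep by (metis lrun.intros(2))
qed

lemma lstep_lab: "lstep k c c' \<Longrightarrow> k < 4"
  by (induction rule: lstep.induct) auto

lemma lrun_lab: "lrun ks c c' \<Longrightarrow> set ks \<subseteq> {0..<4}"
  by (induction rule: lrun.induct) (auto dest: lstep_lab)

fun pot :: "cfg \<Rightarrow> nat" where
  "pot (i, a, b, u) = 2 * length i + length a + length b"

lemma lstep_pot: "lstep k c c' \<Longrightarrow> pot c = Suc (pot c')"
  by (induction rule: lstep.induct) auto

lemma lrun_pot: "lrun ks c c' \<Longrightarrow> pot c = length ks + pot c'"
  by (induction rule: lrun.induct) (auto dest: lstep_pot)

lemma lstep_det: "lstep k c c1 \<Longrightarrow> lstep k c c2 \<Longrightarrow> c1 = c2"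
  by (induction rule: lstep.induct) (auto elim: lstep.cases)

lemma lrun_det: "lrun ks c c1 \<Longrightarrow> lrun ks c c2 \<Longrightarrow> c1 = c2"
proof (induction arbitrary: c2 rule: lrun.induct)
  case (1 c) then show ?case by (auto elim: lrun.cases)
next
  case (2 k c c' ks c'')
  from 2(4) obtain c1 where "lstep k c c1" "lrun ks c1 c2" by (auto elim: lrun.cases)
  with 2 lstep_det show ?case by metis
qed

fun mapc :: "(nat \<Rightarrow> nat) \<Rightarrow> cfg \<Rightarrow> cfg" where
  "mapc g (i, a, b, u) = (map g i, map g a, map g b, map g u)"

lemma lstep_lift0: "lstep k c c' \<Longrightarrow> c = mapc g d \<Longrightarrow> \<exists>d'. lstep k d d' \<and> c' = mapc g d'"
proof (induction rule: lstep.induct)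
  case (1 x inp s1 s2 out)
  obtain i a b u where d: "d = (i, a, b, u)" by (cases d) auto
  with 1 obtain y i' where "i = y # i'" "g y = x" "map g i' = inp" by (auto simp: map_eq_Cons_conv)
  note h = this
  have "lstep 0 d (i', y # a, b, u)" using lstep.intros(1)[of y i' a b u] h d by simp
  moreover have "(inp, x # s1, s2, out) = mapc g (i', y # a, b, u)" using h d 1 by auto
  ultimately show ?case by metis
next
  case (2 x inp s1 s2 out)
  obtain i a b u where d: "d = (i, a, b, u)" by (cases d) auto
  with 2 obtain y i' where "i = y # i'" "g y = x" "map g i' = inp" by (auto simp: map_eq_Cons_conv)
  note h = this
  have "lstep 1 d (i', a, y # b, u)" using lstep.intros(2)[of y i' a b u] h d by simp
  moreover have "(inp, s1, x # s2, out) = mapc g (i', a, y # b, u)" using h d 2 by auto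
  ultimately show ?case by metis
next
  case (3 inp x s1 s2 out)
  obtain i a b u where d: "d = (i, a, b, u)" by (cases d) auto
  with 3 obtain y a' where "a = y # a'" "g y = x" "map g a' = s1" by (auto simp: map_eq_Cons_conv)
  note h = this
  have "lstep 2 d (i, a', b, u @ [y])" using lstep.intros(3)[of i y a' b u] h d by simp
  moreover have "(inp, s1, s2, out @ [x]) = mapc g (i, a', b, u @ [y])" using h d 3 by auto
  ultimately show ?case by metis
next
  case (4 inp s1 x s2 out)
  obtain i a b u where d: "d = (i, a, b, u)" by (cases d) auto
  with 4 obtain y b' where "b = y # b'" "g y = x" "map g b' = s2" by (auto simp: map_eq_Cons_conv)
  note h = this
  have "lstep 3 d (i, a, b', u @ [y])" using lstep.intros(4)[of i a y b' u] h d by simp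
  moreover have "(inp, s1, s2, out @ [x]) = mapc g (i, a, b', u @ [y])" using h d 4 by auto
  ultimately show ?case by metis
qed

lemma lstep_lift: "lstep k (mapc g d) c' \<Longrightarrow> \<exists>d'. lstep k d d' \<and> c' = mapc g d'"
  using lstep_lift0 by blast

lemma lrun_lift: "lrun ks c c' \<Longrightarrow> c = mapc g d \<Longrightarrow> \<exists>d'. lrun ks d d' \<and> c' = mapc g d'"
proof (induction arbitrary: d rule: lrun.induct)
  case (1 c) then show ?case by (metis lrun.intros(1))
next
  case (2 k c c' ks c'')
  then obtain d1 where d1: "lstep k d d1" "c' = mapc g d1" using lstep_lift by blast
  then obtain d' where "lrun ks d1 d'" "c'' = mapc g d'" using 2 by blast
  then show ?case using d1 lrun.intros(2) by blast
qed

fun msc :: "cfg \<Rightarrow> nat multiset" where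
  "msc (i, a, b, u) = mset i + mset a + mset b + mset u"

lemma lstep_ms: "lstep k c c' \<Longrightarrow> msc c = msc c'"
  by (induction rule: lstep.induct) auto

lemma lrun_ms: "lrun ks c c' \<Longrightarrow> msc c = msc c'"
  by (induction rule: lrun.induct) (auto dest: lstep_ms)

lemma is_perm_len: "is_perm n \<sigma> \<Longrightarrow> length \<sigma> = n"
proof -
  assume "is_perm n \<sigma>"
  then have "distinct \<sigma>" "set \<sigma> = {1..n}" unfolding is_perm_def by auto
  then have "length \<sigma> = card {1..n}" using distinct_card[of \<sigma>] by simp
  then show ?thesis by simp
qed

definition wordof :: "nat list \<Rightarrow> nat list" where
  "wordof \<sigma> = (SOME ks. lrun ks (\<sigma>, [], [], []) ([], [], [], [1..<length \<sigma> + 1]))"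

lemma word_props:
  assumes "is_perm n \<sigma>" "par_stack_sortable \<sigma>"
  shows "lrun (wordof \<sigma>) (\<sigma>, [], [], []) ([], [], [], [1..<n + 1])"
proof -
  have len: "length \<sigma> = n" using assms(1) by (rule is_perm_len)
  have "\<exists>ks. lrun ks (\<sigma>, [], [], []) ([], [], [], [1..<length \<sigma> + 1])"
    using assms(2) rtr_lrun unfolding par_stack_sortable_def by blast
  then have "lrun (wordof \<sigma>) (\<sigma>, [], [], []) ([], [], [], [1..<length \<sigma> + 1])"
    unfolding wordof_def by (rule someI_ex)
  then show ?thesis using len by simp
qed

lemma word_q:
  assumes "is_perm n \<sigma>" "par_stack_sortable \<sigma>"
  shows "\<exists>q. lrun (wordof \<sigma>) ([0..<n], [], [], []) ([], [], [], q)
            \<and> map ((!) \<sigma>) q = [1..<n+1] \<and> set q = {0..<n}"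
proof -
  have len: "length \<sigma> = n" using assms is_perm_len by blast
  have "(\<sigma>, [], [], []) = mapc ((!) \<sigma>) ([0..<n], [], [], [])"
    by (simp add: len[symmetric] map_nth)
  then obtain d' where d': "lrun (wordof \<sigma>) ([0..<n], [], [], []) d'"
    "([], [], [], [1..<n + 1]) = mapc ((!) \<sigma>) d'"
    using lrun_lift word_props[OF assms] by blast
  obtain i a b q where dd: "d' = (i, a, b, q)" by (cases d') auto
  with d' have "i = []" "a = []" "b = []" "map ((!) \<sigma>) q = [1..<n+1]" by auto
  note iab = this
  have "msc ([0..<n], [], [], []) = msc d'" using lrun_ms[OF d'(1)] .
  then have "mset [0..<n] = mset q" using dd iab by simp
  then have "set [0..<n] = set q" by (rule mset_eq_setD)
  then have sq: "set q = {0..<n}" by simp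
  have "d' = ([], [], [], q)" using dd iab by simp
  then show ?thesis using d'(1) iab(4) sq by blast
qed

lemma p_count_bound: "p_count n \<le> 16 ^ n"
proof -
  let ?A = "{\<sigma>. is_perm n \<sigma> \<and> par_stack_sortable \<sigma>}"
  let ?W = "{xs. set xs \<subseteq> {0..<4::nat} \<and> length xs = 2 * n}"
  have inj: "inj_on wordof ?A"
  proof (rule inj_onI)
    fix s1 s2 assume s1: "s1 \<in> ?A" and s2: "s2 \<in> ?A" and eq: "wordof s1 = wordof s2"
    obtain q1 where q1: "lrun (wordof s1) ([0..<n], [], [], []) ([], [], [], q1)"
      "map ((!) s1) q1 = [1..<n+1]" "set q1 = {0..<n}" using word_q s1 by blast
    obtain q2 where q2: "lrun (wordof s2) ([0..<n], [], [], []) ([], [], [], q2)"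
      "map ((!) s2) q2 = [1..<n+1]" "set q2 = {0..<n}" using word_q s2 by blast
    have "lrun (wordof s2) ([0..<n], [], [], []) ([], [], [], q1)" using q1(1) eq by simp
    then have "([], [], [], q1) = ([], [], [], q2)" using q2(1) lrun_det by blast
    then have "q1 = q2" by simp
    show "s1 = s2"
    proof (rule nth_equalityI)
      show "length s1 = length s2" using s1 s2 is_perm_len by auto
      fix j assume "j < length s1"
      then have "j \<in> set q1" using q1(3) s1 is_perm_len by auto
      have "map ((!) s1) q1 = map ((!) s2) q1" using q1(2) q2(2) \<open>q1 = q2\<close> by simp
      then show "s1 ! j = s2 ! j" using \<open>j \<in> set q1\<close> unfolding map_eq_conv by blast
    qed
  qed
  have sub: "wordof ` ?A \<subseteq> ?W"
  proof
    fix w assume "w \<in> wordof ` ?A"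
    then obtain s where s: "s \<in> ?A" "w = wordof s" by auto
    have r: "lrun w (s, [], [], []) ([], [], [], [1..<n + 1])" using word_props s by auto
    have "length s = n" using s is_perm_len by auto
    then show "w \<in> ?W" using lrun_pot[OF r] lrun_lab[OF r] by auto
  qed
  have fW: "finite ?W" by (rule finite_lists_length_eq) auto
  have "card (wordof ` ?A) \<le> card ?W" using fW sub by (rule card_mono)
  then have "card ?A \<le> card ?W" using card_image[OF inj] by simp
  also have "card ?W = 4 ^ (2 * n)" by (simp add: card_lists_length_eq)
  also have "\<dots> = 16 ^ n" by (simp add: power_mult)
  finally show ?thesis unfolding p_count_def .
qed

fun sim :: "cfg \<Rightarrow> nat list \<times> nat list \<times> nat list" where
  "sim (i, a, b, u) = (i, a @ rev b, u)"

lemma pstep_dstep: "pstep c c' \<Longrightarrow> dstep (sim c) (sim c')"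
proof (induction rule: pstep.induct)
  case (push2 x inp s1 s2 out)
  then show ?case using dstep.push_back[of x inp "s1 @ rev s2" out] by simp
next
  case (pop2 inp s1 x s2 out)
  then show ?case using dstep.pop_back[of inp "s1 @ rev s2" x out] by simp
qed (auto intro: dstep.intros)

lemma rtr_sim: "pstep\<^sup>*\<^sup>* c c' \<Longrightarrow> dstep\<^sup>*\<^sup>* (sim c) (sim c')"
  by (induction rule: rtranclp_induct) (auto intro: rtranclp.rtrancl_into_rtrancl pstep_dstep)

lemma p_le_d: "p_count n \<le> d_count n"
proof -
  let ?A = "{\<sigma>. is_perm n \<sigma> \<and> par_stack_sortable \<sigma>}"
  let ?B = "{\<sigma>. is_perm n \<sigma> \<and> deque_sortable \<sigma>}"
  let ?C = "{xs. set xs \<subseteq> {1..n} \<and> length xs = n}"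
  have AB: "?A \<subseteq> ?B"
  proof
    fix s assume "s \<in> ?A"
    then have "is_perm n s" "pstep\<^sup>*\<^sup>* (s, [], [], []) ([], [], [], [1..<length s + 1])"
      unfolding par_stack_sortable_def by auto
    then show "s \<in> ?B" using rtr_sim[of "(s, [], [], [])" "([], [], [], [1..<length s + 1])"]
      unfolding deque_sortable_def by simp
  qed
  have BC: "?B \<subseteq> ?C"
  proof
    fix s assume "s \<in> ?B"
    then have "is_perm n s" by simp
    then show "s \<in> ?C" using is_perm_len[of n s] unfolding is_perm_def by auto
  qed
  have fC: "finite ?C" by (rule finite_lists_length_eq) auto
  have "finite ?B" by (rule finite_subset[OF BC fC])
  then have "card ?A \<le> card ?B" by (rule card_mono[OF _ AB])
  then show ?thesis unfolding p_count_def d_count_def .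
qed

lemma p0: "p_count 0 = 1"
proof -
  have "{\<sigma>. is_perm 0 \<sigma> \<and> par_stack_sortable \<sigma>} = {[]}"
    by (auto simp: is_perm_def par_stack_sortable_def)
  then show ?thesis unfolding p_count_def by simp
qed



lemma alg1:
  fixes P t s :: real
  assumes P1: "P \<ge> 1" and t0: "0 \<le> t" and t1: "t < 1"
    and hs: "s^2 = 1 - 4*P + 4*P^2 - 8*P^2*t + 4*P^2*t^2 - 4*P*t"
  shows "sqrt (2*P) \<ge> 1 + sqrt (2*t*P)"
proof -
  define a where "a = sqrt (2*P)"
  define b where "b = sqrt (2*t*P)"
  have a2: "a^2 = 2*P" using P1 by (simp add: a_def)
  have P0: "0 \<le> P" "0 \<le> P*t" using P1 t0 by simp_all
  have b2: "b^2 = 2*t*P" unfolding b_def by (rule real_sqrt_pow2) (use P0 in simp)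
  have a0: "a \<ge> 0" "b \<ge> 0" using P0 by (simp_all add: a_def b_def)
  have ab: "b \<le> a" unfolding a_def b_def using P1 t0 t1 by (intro real_sqrt_le_mono) (simp add: mult_right_mono)
  have fact: "s^2 = ((a+b)^2 - 1) * ((a-b)^2 - 1)"
  proof -
    have "((a+b)^2 - 1) * ((a-b)^2 - 1) = (a^2-b^2)^2 - 2*a^2 - 2*b^2 + 1"
      by (simp add: algebra_simps power2_eq_square)
    also have "\<dots> = s^2" unfolding a2 b2 hs by (simp add: algebra_simps power2_eq_square)
    finally show ?thesis by simp
  qed
  have pos: "(a+b)^2 - 1 > 0"
  proof -
    have "(a+b)^2 \<ge> a^2" using a0 by (simp add: power_mono)
    then show ?thesis using a2 P1 by linarith
  qed
  have "((a+b)^2 - 1) * ((a-b)^2 - 1) \<ge> 0" using zero_le_power2[of s] unfolding fact .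
  then have "(a-b)^2 \<ge> 1" using pos by (simp add: zero_le_mult_iff)
  then have "1^2 \<le> (a-b)^2" by (simp only: one_power2)
  then have "1 \<le> a - b" by (rule power2_le_imp_le) (use ab in simp)
  then show ?thesis unfolding a_def b_def by simp
qed

lemma alg2:
  fixes P t s dv :: real
  assumes P1: "P \<ge> 1" and t0: "0 \<le> t" and t1: "t < 1"
    and hs: "s^2 = 1 - 4*P + 4*P^2 - 8*P^2*t + 4*P^2*t^2 - 4*P*t"
    and hD: "2 * dv = 2 + t + 2 * P * t - 2 * P * t^2 - t * s"
    and PD: "P \<le> dv"
  shows "P \<le> 3"
proof -
  have c0: "2*P*(1-t) \<ge> 0" using P1 t1 by simp
  have "s^2 \<le> (2*P*(1-t))^2"
  proof -
    have "(2*P*(1-t))^2 = s^2 + 4*P*(1+t) - 1" unfolding hs by (simp add: algebra_simps power2_eq_square)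
    moreover have "4*P*(1+t) \<ge> 1" proof -
      have "0 \<le> P*t" using P1 t0 by simp
      then show ?thesis using P1 by (simp add: algebra_simps)
    qed
    ultimately show ?thesis by linarith
  qed
  then have "\<bar>s\<bar>^2 \<le> (2*P*(1-t))^2" by simp
  then have "\<bar>s\<bar> \<le> 2*P*(1-t)" using c0 by (rule power2_le_imp_le)
  then have "-s \<le> 2*P*(1-t)" by linarith
  then have "t*(-s) \<le> t*(2*P*(1-t))" using t0 by (rule mult_left_mono)
  moreover have "t*(2*P*(1-t)) = 2*P*t - 2*P*t^2" by (simp add: algebra_simps power2_eq_square)
  moreover have "t*(-s) = -(t * s)" by simp
  moreover have "P * (2 - 4*t + 4*t^2) = 2*P - 4*P*t + 4*P*t^2" by (simp add: algebra_simps)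
  ultimately have "P * (2 - 4*t + 4*t^2) \<le> 2 + t" using hD PD by linarith
  moreover have "P \<le> P * (2 - 4*t + 4*t^2)"
  proof -
    have "1 \<le> 2 - 4*t + 4*t^2" using zero_le_power2[of "1-2*t"] by (simp add: algebra_simps power2_eq_square)
    from mult_left_mono[OF this, of P] show ?thesis using P1 by simp
  qed
  ultimately show ?thesis using t1 by linarith
qed



lemma rad_pos: "conv_radius (\<lambda>n. real (p_count n)) \<ge> ereal (1/32)"
proof -
  have "summable (\<lambda>n. real (p_count n) * (1/32)^n)"
  proof (rule summable_comparison_test'[of "\<lambda>n. (1/2::real)^n" 0])
    show "summable (\<lambda>n. (1/2::real)^n)" by simp
    fix n :: nat
    have "real (p_count n) \<le> real (16^n)" using p_count_bound[of n] by (simp only: of_nat_le_iff)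
    then have "real (p_count n) \<le> 16^n" by simp
    then have "real (p_count n) * (1/32)^n \<le> 16^n * (1/32)^n" by (simp add: mult_right_mono)
    also have "\<dots> = (1/2)^n" by (simp add: power_mult_distrib[symmetric])
    finally show "norm (real (p_count n) * (1/32)^n) \<le> (1/2)^n" by simp
  qed
  from conv_radius_geI[OF this] show ?thesis by (simp only: real_norm_def abs_of_nonneg)
qed

lemma rad_add: "x < fps_conv_radius f \<Longrightarrow> x < fps_conv_radius g \<Longrightarrow> x < fps_conv_radius (f + g)"
  using fps_conv_radius_add[of f g] by (meson min_less_iff_conj order_less_le_trans)
lemma rad_diff: "x < fps_conv_radius f \<Longrightarrow> x < fps_conv_radius g \<Longrightarrow> x < fps_conv_radius (f - g)"
  using fps_conv_radius_diff[of f g] by (meson min_less_iff_conj order_less_le_trans)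
lemma rad_mult: "x < fps_conv_radius f \<Longrightarrow> x < fps_conv_radius (g::'a::{banach, real_normed_div_algebra, comm_ring_1} fps) \<Longrightarrow> x < fps_conv_radius (f * g)"
  using fps_conv_radius_mult[of f g] by (meson min_less_iff_conj order_less_le_trans)
lemma rad_pow: "x < fps_conv_radius f \<Longrightarrow> x < fps_conv_radius (f ^ n)"
  using fps_conv_radius_power[of f n] by (meson order_less_le_trans)

lemma radge_add: "x \<le> fps_conv_radius f \<Longrightarrow> x \<le> fps_conv_radius g \<Longrightarrow> x \<le> fps_conv_radius (f + g)"
  using fps_conv_radius_add[of f g] by (meson min.boundedI order_trans)
lemma radge_diff: "x \<le> fps_conv_radius f \<Longrightarrow> x \<le> fps_conv_radius g \<Longrightarrow> x \<le> fps_conv_radius (f - g)"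
  using fps_conv_radius_diff[of f g] by (meson min.boundedI order_trans)
lemma radge_mult: "x \<le> fps_conv_radius f \<Longrightarrow> x \<le> fps_conv_radius (g::'a::{banach, real_normed_div_algebra, comm_ring_1} fps) \<Longrightarrow> x \<le> fps_conv_radius (f * g)"
  using fps_conv_radius_mult[of f g] by (meson min.boundedI order_trans)

definition EV :: "real fps \<Rightarrow> real \<Rightarrow> real \<Rightarrow> bool" where
  "EV f z v \<longleftrightarrow> ereal (norm z) < fps_conv_radius f \<and> eval_fps f z = v"

lemma ev_add: "EV f z a \<Longrightarrow> EV g z b \<Longrightarrow> EV (f + g) z (a + b)"
  unfolding EV_def using rad_add eval_fps_add by metis
lemma ev_diff: "EV f z a \<Longrightarrow> EV g z b \<Longrightarrow> EV (f - g) z (a - b)"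
  unfolding EV_def using rad_diff eval_fps_diff by metis
lemma ev_mult: "EV f z a \<Longrightarrow> EV g z b \<Longrightarrow> EV (f * g) z (a * b)"
  unfolding EV_def using rad_mult eval_fps_mult by metis
lemma ev_pow: "EV f z a \<Longrightarrow> EV (f ^ n) z (a ^ n)"
  unfolding EV_def using rad_pow eval_fps_power by metis
lemma ev_num: "EV (numeral n) z (numeral n)"
  unfolding EV_def by simp
lemma ev_one: "EV 1 z 1"
  unfolding EV_def by simp
lemma ev_X: "EV fps_X z z"
  unfolding EV_def by simp
lemmas ev_intros = ev_add ev_diff ev_mult ev_pow ev_num ev_one ev_X

theorem theorem3p1:
  fixes tc :: real
  assumes tc_def: "ereal tc = conv_radius (\<lambda>n. real (p_count n))"
    and known_D: "\<exists>S :: real fps. fps_nth S 0 = 1 \<and>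
        S ^ 2 = 1 - 4 * Pfps + 4 * Pfps ^ 2 - 8 * Pfps ^ 2 * fps_X
                + 4 * Pfps ^ 2 * fps_X ^ 2 - 4 * Pfps * fps_X \<and>
        2 * Dfps = 2 + fps_X + 2 * Pfps * fps_X - 2 * Pfps * fps_X ^ 2 - fps_X * S"
    and same_radius: "conv_radius (\<lambda>n. real (d_count n)) = conv_radius (\<lambda>n. real (p_count n))"
    and tc_lt_1: "tc < 1"
  shows "(\<forall>t. 0 \<le> t \<and> t < tc \<longrightarrow> sqrt (2 * Pval t) \<ge> 1 + sqrt (2 * t * Pval t))
       \<and> (\<exists>L. (Pval \<longlongrightarrow> L) (at_left tc) \<and> sqrt (2 * L) \<ge> 1 + sqrt (2 * tc * L))"
proof -
  have tcpos: "tc \<ge> 1/32" using rad_pos unfolding tc_def[symmetric] by simp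
  obtain S :: "real fps" where S2: "S ^ 2 = 1 - 4 * Pfps + 4 * Pfps ^ 2 - 8 * Pfps ^ 2 * fps_X
                + 4 * Pfps ^ 2 * fps_X ^ 2 - 4 * Pfps * fps_X"
    and SD: "2 * Dfps = 2 + fps_X + 2 * Pfps * fps_X - 2 * Pfps * fps_X ^ 2 - fps_X * S"
    using known_D by blast
  have radP: "fps_conv_radius Pfps = ereal tc" using tc_def by (simp add: fps_conv_radius_def Pfps_def)
  have radD: "fps_conv_radius Dfps = ereal tc"
    using tc_def same_radius by (simp add: fps_conv_radius_def Dfps_def)
  have XS: "S * fps_X = 2 + fps_X + 2 * Pfps * fps_X - 2 * Pfps * fps_X ^ 2 - 2 * Dfps"
    using SD by (simp add: algebra_simps)
  have "ereal tc \<le> fps_conv_radius (S * fps_X)" unfolding XS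
    by (intro radge_add radge_diff radge_mult) (simp_all add: radP radD)
  also have "fps_conv_radius (S * fps_X) = fps_conv_radius S"
    using fps_conv_radius_shift[of 1 "S * fps_X"] unfolding fps_shift_times_fps_X' by (rule sym)
  finally have radS: "ereal tc \<le> fps_conv_radius S" .
  have evP: "\<And>t. eval_fps Pfps t = Pval t" by (simp add: eval_fps_def Pval_def Pfps_def)
  have sumP: "\<And>t. \<bar>t\<bar> < tc \<Longrightarrow> summable (\<lambda>n. real (p_count n) * t ^ n)"
    by (intro summable_in_conv_radius) (simp add: tc_def[symmetric])
  have sumD: "\<And>t. \<bar>t\<bar> < tc \<Longrightarrow> summable (\<lambda>n. real (d_count n) * t ^ n)"
    by (intro summable_in_conv_radius) (simp add: same_radius tc_def[symmetric])
  have mono: "Pval x \<le> Pval y" if "0 \<le> x" "x \<le> y" "y < tc" for x y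
    unfolding Pval_def using that
    by (intro suminf_le sumP) (auto intro!: mult_left_mono power_mono)
  have ge1: "Pval t \<ge> 1" if "0 \<le> t" "t < tc" for t
  proof -
    have "(\<Sum>n\<in>{0}. real (p_count n) * t ^ n) \<le> Pval t" unfolding Pval_def
      using that by (intro sum_le_suminf sumP) auto
    then show ?thesis by (simp add: p0)
  qed
  have key: "(eval_fps S t)^2 = 1 - 4*P + 4*P^2 - 8*P^2*t + 4*P^2*t^2 - 4*P*t
           \<and> 2 * eval_fps Dfps t = 2 + t + 2 * P * t - 2 * P * t^2 - t * eval_fps S t
           \<and> P \<le> eval_fps Dfps t"
    if t: "0 \<le> t" "t < tc" and Pdef: "P = Pval t" for t P
  proof -
    have n: "ereal (norm t) < ereal tc" using t by simp
    have rP: "ereal (norm t) < fps_conv_radius Pfps" using n radP by simp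
    have rD: "ereal (norm t) < fps_conv_radius Dfps" using n radD by simp
    have rS: "ereal (norm t) < fps_conv_radius S" using n radS by (meson order_less_le_trans)
    have evS0: "EV S t (eval_fps S t)" using rS by (simp add: EV_def)
    have evP0: "EV Pfps t P" using rP by (simp add: EV_def evP Pdef)
    have evD0: "EV Dfps t (eval_fps Dfps t)" using rD by (simp add: EV_def)
    have e1: "EV (S^2) t ((eval_fps S t)^2)" by (intro ev_intros evS0)
    have e2: "EV (1 - 4 * Pfps + 4 * Pfps ^ 2 - 8 * Pfps ^ 2 * fps_X
                + 4 * Pfps ^ 2 * fps_X ^ 2 - 4 * Pfps * fps_X) t
              (1 - 4*P + 4*P^2 - 8*P^2*t + 4*P^2*t^2 - 4*P*t)"
      by (intro ev_intros evP0)
    have a1: "eval_fps (S^2) t = (eval_fps S t)^2" using e1 unfolding EV_def by (rule conjunct2)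
    have a2: "eval_fps (1 - 4 * Pfps + 4 * Pfps ^ 2 - 8 * Pfps ^ 2 * fps_X
                + 4 * Pfps ^ 2 * fps_X ^ 2 - 4 * Pfps * fps_X) t
              = 1 - 4*P + 4*P^2 - 8*P^2*t + 4*P^2*t^2 - 4*P*t" using e2 unfolding EV_def by (rule conjunct2)
    have a3: "eval_fps (S^2) t = 1 - 4*P + 4*P^2 - 8*P^2*t + 4*P^2*t^2 - 4*P*t"
      using a2 by (simp only: S2)
    have A: "(eval_fps S t)^2 = 1 - 4*P + 4*P^2 - 8*P^2*t + 4*P^2*t^2 - 4*P*t"
      using trans[OF a1[symmetric] a3] .
    have e3: "EV (2 * Dfps) t (2 * eval_fps Dfps t)" by (intro ev_intros evD0)
    have e4: "EV (2 + fps_X + 2 * Pfps * fps_X - 2 * Pfps * fps_X ^ 2 - fps_X * S) t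
                 (2 + t + 2 * P * t - 2 * P * t^2 - t * eval_fps S t)"
      by (intro ev_intros evP0 evS0)
    have b1: "eval_fps (2 * Dfps) t = 2 * eval_fps Dfps t" using e3 unfolding EV_def by (rule conjunct2)
    have b2: "eval_fps (2 + fps_X + 2 * Pfps * fps_X - 2 * Pfps * fps_X ^ 2 - fps_X * S) t
                 = 2 + t + 2 * P * t - 2 * P * t^2 - t * eval_fps S t" using e4 unfolding EV_def by (rule conjunct2)
    have b3: "eval_fps (2 * Dfps) t = 2 + t + 2 * P * t - 2 * P * t^2 - t * eval_fps S t"
      using b2 by (simp only: SD)
    have B: "2 * eval_fps Dfps t = 2 + t + 2 * P * t - 2 * P * t^2 - t * eval_fps S t"
      using trans[OF b1[symmetric] b3] .
    have abs: "\<bar>t\<bar> < tc" using t by simp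
    have C: "P \<le> eval_fps Dfps t" unfolding Pdef Pval_def eval_fps_def Dfps_def fps_nth_Abs_fps
    proof (rule suminf_le)
      show "summable (\<lambda>n. real (p_count n) * t ^ n)" using abs by (rule sumP)
      show "summable (\<lambda>n. real (d_count n) * t ^ n)" using abs by (rule sumD)
      fix n show "real (p_count n) * t ^ n \<le> real (d_count n) * t ^ n"
        using t by (intro mult_right_mono) (simp_all add: p_le_d)
    qed
    show ?thesis using A B C by (intro conjI)
  qed
  have tlt1: "t < 1" if "t < tc" for t using that tc_lt_1 by linarith
  have part1: "sqrt (2 * Pval t) \<ge> 1 + sqrt (2 * t * Pval t)" if "0 \<le> t" "t < tc" for t
    using alg1[OF ge1[OF that] that(1) tlt1[OF that(2)] key[OF that refl, THEN conjunct1]] .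
  have bnd: "Pval t \<le> 3" if "0 \<le> t" "t < tc" for t
    using alg2[OF ge1[OF that] that(1) tlt1[OF that(2)] key[OF that refl, THEN conjunct1]
      key[OF that refl, THEN conjunct2, THEN conjunct1] key[OF that refl, THEN conjunct2, THEN conjunct2]] .
  define L where "L = Sup (Pval ` {0..<tc})"
  have ne: "Pval ` {0..<tc} \<noteq> {}" using tcpos by auto
  have bdd: "bdd_above (Pval ` {0..<tc})" using bnd by (intro bdd_aboveI[of _ 3]) auto
  have leL: "Pval t \<le> L" if "0 \<le> t" "t < tc" for t
    unfolding L_def using that bdd by (intro cSUP_upper) auto
  have lim: "(Pval \<longlongrightarrow> L) (at_left tc)"
  proof (rule order_tendstoI)
    fix a assume "a < L"
    then obtain x where x: "x \<in> {0..<tc}" "a < Pval x"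
      using less_cSup_iff[OF ne bdd] \<open>a < L\<close> unfolding L_def by auto
    have "eventually (\<lambda>y. y \<in> {x<..<tc}) (at_left tc)" using x by (intro eventually_at_left_real) auto
    then show "eventually (\<lambda>y. a < Pval y) (at_left tc)"
    proof (rule eventually_mono)
      fix y assume "y \<in> {x<..<tc}"
      then show "a < Pval y" using mono[of x y] x by auto
    qed
  next
    fix a assume "L < a"
    have "eventually (\<lambda>y. y \<in> {0<..<tc}) (at_left tc)" using tcpos by (intro eventually_at_left_real) auto
    then show "eventually (\<lambda>y. Pval y < a) (at_left tc)"
    proof (rule eventually_mono)
      fix y assume "y \<in> {0<..<tc}"
      then show "Pval y < a" using leL[of y] \<open>L < a\<close> by auto
    qed
  qed
  have "((\<lambda>y. sqrt (2 * Pval y) - sqrt (2 * y * Pval y)) \<longlongrightarrow> sqrt (2 * L) - sqrt (2 * tc * L)) (at_left tc)"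
    by (intro tendsto_intros lim tendsto_ident_at)
  moreover have "eventually (\<lambda>y. 1 \<le> sqrt (2 * Pval y) - sqrt (2 * y * Pval y)) (at_left tc)"
  proof -
    have "eventually (\<lambda>y. y \<in> {0<..<tc}) (at_left tc)" using tcpos by (intro eventually_at_left_real) auto
    then show ?thesis
    proof (rule eventually_mono)
      fix y assume y: "y \<in> {0<..<tc}"
      then have "1 + sqrt (2 * y * Pval y) \<le> sqrt (2 * Pval y)" using part1[of y] by simp
      then show "1 \<le> sqrt (2 * Pval y) - sqrt (2 * y * Pval y)" by linarith
    qed
  qed
  ultimately have "1 \<le> sqrt (2 * L) - sqrt (2 * tc * L)"
    by (intro tendsto_lowerbound) auto
  then have fin: "1 + sqrt (2 * tc * L) \<le> sqrt (2 * L)" by linarith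
  show ?thesis
  proof (intro conjI allI impI exI[of _ L])
    fix t :: real assume "0 \<le> t \<and> t < tc"
    then show "1 + sqrt (2 * t * Pval t) \<le> sqrt (2 * Pval t)" using part1 by blast
  next
    show "(Pval \<longlongrightarrow> L) (at_left tc)" by (rule lim)
  next
    show "1 + sqrt (2 * tc * L) \<le> sqrt (2 * L)" by (rule fin)
  qed
qed

end
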